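(* Let $f(1),f(2),f(3)$ be positive real numbers with $f(1)+f(2)+f(3)=1$. Then there exist a $1$-balanced sequence $\mathbf{u}$ over $\{a,b\}$, a $1$-balanced sequence $\mathbf{b}$ over $\{2,3\}$ and the constant sequence $\mathbf{a}=1^\omega$ such that the ternary sequence $\mathbf{v}=\mathrm{colour}(\mathbf{u},\mathbf{a},\mathbf{b})$ satisfies: (1) for each $i\in\{1,2,3\}$ the frequency of the letter $i$ in $\mathbf{v}$ exists and equals $f(i)$; (2) $\mathbf{v}$ is $2$-balanced.
   Context: A sequence $\mathbf{u}$ over an alphabet $\mathcal A$ is $C$-balanced ($C\ge 1$ an integer) if for any two factors $u,v$ of $\mathbf{u}$ with $|u|=|v|$ and every letter $x\in\mathcal A$ we have $\bigl||u|_x-|v|_x\bigr|\le C$, where $|w|_x$ is the number of occurrences of $x$ in $w$. The frequency of a letter $x$ in $\mathbf{u}=u_0u_1\cdots$ is $\lim_{n\to\infty}|u_0\cdots u_{n-1}|_x/n$, if the limit exists. Colouring: given a sequence $\mathbf{u}$ over $\{a,b\}$ and sequences $\mathbf{a},\mathbf{b}$ over disjoint alphabets $\mathcal A,\mathcal B$, $\mathrm{colour}(\mathbf{u},\mathbf{a},\mathbf{b})$ is the sequence over $\mathcal A\cup\mathcal B$ obtained from $\mathbf{u}$ by replacing the subsequence of all occurrences of $a$ (in order) by the sequence $\mathbf{a}$ and the subsequence of all occurrences of $b$ (in order) by the sequence $\mathbf{b}$. *)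

theory Defs
  imports Complex_Main
begin

datatype ab = LetA | LetB

definition occ :: "(nat \<Rightarrow> 'a) \<Rightarrow> 'a \<Rightarrow> nat \<Rightarrow> nat \<Rightarrow> nat" where
  "occ u x i n = card {k. i \<le> k \<and> k < i + n \<and> u k = x}"

definition balanced :: "nat \<Rightarrow> (nat \<Rightarrow> 'a) \<Rightarrow> bool" where
  "balanced C u \<longleftrightarrow> (\<forall>x i j n. \<bar>int (occ u x i n) - int (occ u x j n)\<bar> \<le> int C)"

definition has_freq :: "(nat \<Rightarrow> 'a) \<Rightarrow> 'a \<Rightarrow> real \<Rightarrow> bool" where
  "has_freq u x r \<longleftrightarrow> ((\<lambda>n. real (occ u x 0 n) / real n) \<longlonglongrightarrow> r)"

text \<open>colour(u, a, b): the k-th occurrence of LetA (counting from 0) is replaced by a k,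
  the k-th occurrence of LetB by b k.\<close>
definition colour :: "(nat \<Rightarrow> ab) \<Rightarrow> (nat \<Rightarrow> 'c) \<Rightarrow> (nat \<Rightarrow> 'c) \<Rightarrow> nat \<Rightarrow> 'c" where
  "colour u a b n = (if u n = LetA then a (occ u LetA 0 n) else b (occ u LetB 0 n))"

end

theory Submission
  imports Defs
begin

lemma occ_0: "occ u x i 0 = 0"
  unfolding occ_def by simp

lemma occ_Suc: "occ u x i (Suc n) = occ u x i n + (if u (i+n) = x then 1 else 0)"
proof -
  have e: "{k. i \<le> k \<and> k < i + Suc n \<and> u k = x} =
        {k. i \<le> k \<and> k < i + n \<and> u k = x} \<union> {k. k = i + n \<and> u k = x}"
    by (rule set_eqI) (simp only: mem_Collect_eq Un_iff, linarith)
  have d: "{k. i \<le> k \<and> k < i + n \<and> u k = x} \<inter> {k. k = i + n \<and> u k = x} = {}" by auto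
  have f: "finite {k. i \<le> k \<and> k < i + n \<and> u k = x}" "finite {k. k = i + n \<and> u k = x}" by simp_all
  have c: "card {k. k = i + n \<and> u k = x} = (if u (i+n) = x then 1 else 0)"
  proof (cases "u (i+n) = x")
    case True then have "{k. k = i + n \<and> u k = x} = {i+n}" by auto
    then show ?thesis using True by simp
  next
    case False then have "{k. k = i + n \<and> u k = x} = {}" by auto
    then show ?thesis using False by simp
  qed
  show ?thesis unfolding occ_def e card_Un_disjoint[OF f d] c ..
qed

lemma occ_shift: "int (occ u x i n) = int (occ u x 0 (i+n)) - int (occ u x 0 i)"
proof (induction n)
  case 0 then show ?case by (simp add: occ_0)
next
  case (Suc n)
  have a: "occ u x i (Suc n) = occ u x i n + (if u (i+n) = x then 1 else 0)" by (rule occ_Suc)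
  have b: "occ u x 0 (i + Suc n) = occ u x 0 (i+n) + (if u (i+n) = x then 1 else 0)"
    using occ_Suc[of u x 0 "i+n"] by simp
  show ?case unfolding a b using Suc by simp
qed

lemma balancedI:
  assumes "\<And>x m. int (occ s x 0 m) = G x m"
    and "\<And>x i j n. \<bar>(G x (i+n) - G x i) - (G x (j+n) - G x j)\<bar> \<le> int C"
  shows "balanced C s"
  unfolding balanced_def
proof (intro allI)
  fix x i j n
  show "\<bar>int (occ s x i n) - int (occ s x j n)\<bar> \<le> int C"
    using assms(2)[of x i n j] unfolding occ_shift[of s x i n] occ_shift[of s x j n] assms(1) .
qed

definition mech :: "real \<Rightarrow> 'a \<Rightarrow> 'a \<Rightarrow> nat \<Rightarrow> 'a" where
  "mech g p q n = (if \<lfloor>real (Suc n) * g\<rfloor> - \<lfloor>real n * g\<rfloor> = 1 then p else q)"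

lemma floor_step:
  assumes "0 \<le> g" "g \<le> 1"
  shows "\<lfloor>real (Suc n) * g\<rfloor> - \<lfloor>real n * g\<rfloor> = 0 \<or> \<lfloor>real (Suc n) * g\<rfloor> - \<lfloor>real n * g\<rfloor> = 1"
proof -
  have e: "real (Suc n) * g = real n * g + g" by (simp add: algebra_simps)
  have "\<lfloor>real n * g\<rfloor> \<le> \<lfloor>real n * g + g\<rfloor>" using assms by (intro floor_mono) simp
  moreover have "\<lfloor>real n * g + g\<rfloor> \<le> \<lfloor>real n * g + 1\<rfloor>" using assms by (intro floor_mono) simp
  ultimately show ?thesis unfolding e by linarith
qed

lemma mech_step2: "mech g p q m = p \<or> mech g p q m = q"
  unfolding mech_def by auto

lemma mech_step:
  assumes "0 \<le> g" "g \<le> 1" "p \<noteq> q"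
  shows "\<lfloor>real (Suc m) * g\<rfloor> = \<lfloor>real m * g\<rfloor> + (if mech g p q m = p then 1 else 0)"
  using floor_step[OF assms(1,2), of m] assms(3) unfolding mech_def by (auto split: if_split)

lemma mech_occ:
  assumes "p \<noteq> q" "0 \<le> g" "g \<le> 1"
  shows "int (occ (mech g p q) x 0 m) =
    (if x = p then \<lfloor>real m * g\<rfloor> else if x = q then int m - \<lfloor>real m * g\<rfloor> else 0)"
proof (induction m)
  case 0 then show ?case by (simp add: occ_0)
next
  case (Suc m)
  define F where "F = \<lfloor>real m * g\<rfloor>"
  have st: "\<lfloor>real (Suc m) * g\<rfloor> = F + (if mech g p q m = p then 1 else 0)"
    unfolding F_def by (rule mech_step[OF assms(2,3,1)])
  have o: "int (occ (mech g p q) x 0 (Suc m)) = int (occ (mech g p q) x 0 m) + (if mech g p q m = x then 1 else 0)"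
    by (simp add: occ_Suc)
  have IH: "int (occ (mech g p q) x 0 m) = (if x = p then F else if x = q then int m - F else 0)"
    using Suc unfolding F_def .
  show ?case unfolding st o IH using mech_step2[of g p q m] assms(1) by auto
qed

lemma const_occ: "int (occ (\<lambda>_. c) x 0 m) = (if x = c then int m else 0)"
  by (induction m) (auto simp: occ_0 occ_Suc)

lemma colour_occ:
  "occ (colour u a b) y 0 n = occ a y 0 (occ u LetA 0 n) + occ b y 0 (occ u LetB 0 n)"
proof (induction n)
  case 0 then show ?case by (simp add: occ_0)
next
  case (Suc n)
  show ?case
  proof (cases "u n")
    case LetA then show ?thesis using Suc by (simp add: occ_Suc colour_def)
  next
    case LetB then show ?thesis using Suc by (simp add: occ_Suc colour_def)
  qed
qed

lemma floor_diff_bounds: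
  fixes a b :: real
  shows "real_of_int (\<lfloor>a\<rfloor> - \<lfloor>b\<rfloor>) > a - b - 1" "real_of_int (\<lfloor>a\<rfloor> - \<lfloor>b\<rfloor>) < a - b + 1"
proof -
  have "real_of_int \<lfloor>a\<rfloor> \<le> a" "a < real_of_int \<lfloor>a\<rfloor> + 1" "real_of_int \<lfloor>b\<rfloor> \<le> b" "b < real_of_int \<lfloor>b\<rfloor> + 1"
    by (rule of_int_floor_le, rule real_of_int_floor_add_one_gt, rule of_int_floor_le, rule real_of_int_floor_add_one_gt)
  then show "real_of_int (\<lfloor>a\<rfloor> - \<lfloor>b\<rfloor>) > a - b - 1" "real_of_int (\<lfloor>a\<rfloor> - \<lfloor>b\<rfloor>) < a - b + 1"
    unfolding of_int_diff by linarith+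
qed

lemma int_lt2: "real_of_int (z::int) < 2 \<Longrightarrow> z \<le> 1" by linarith
lemma int_lt3: "real_of_int (z::int) < 3 \<Longrightarrow> z \<le> 2" by linarith

lemma K1:
  fixes g :: real
  shows "\<bar>(\<lfloor>real (i+n) * g\<rfloor> - \<lfloor>real i * g\<rfloor>) - (\<lfloor>real (j+n) * g\<rfloor> - \<lfloor>real j * g\<rfloor>)\<bar> \<le> 1"
proof -
  define P where "P = \<lfloor>real (i+n) * g\<rfloor> - \<lfloor>real i * g\<rfloor>"
  define Q where "Q = \<lfloor>real (j+n) * g\<rfloor> - \<lfloor>real j * g\<rfloor>"
  have ei: "real (i+n) * g - real i * g = real n * g" by (simp add: algebra_simps)
  have ej: "real (j+n) * g - real j * g = real n * g" by (simp add: algebra_simps)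
  have b1: "real (i+n) * g - real i * g - 1 < P" "P < real (i+n) * g - real i * g + 1"
    unfolding P_def by (rule floor_diff_bounds)+
  have b2: "real (j+n) * g - real j * g - 1 < Q" "Q < real (j+n) * g - real j * g + 1"
    unfolding Q_def by (rule floor_diff_bounds)+
  have "-2 < real_of_int P - real_of_int Q" "real_of_int P - real_of_int Q < 2"
    using b1 b2 ei ej by linarith+
  then have "\<bar>P - Q\<bar> \<le> 1" by linarith
  then show ?thesis unfolding P_def Q_def .
qed

lemma K2:
  fixes g :: real and X1 Y1 X2 Y2 :: int
  assumes "\<bar>(X1 - Y1) - (X2 - Y2)\<bar> \<le> 1" "0 \<le> g" "g \<le> 1"
  shows "\<bar>(\<lfloor>X1 * g\<rfloor> - \<lfloor>Y1 * g\<rfloor>) - (\<lfloor>X2 * g\<rfloor> - \<lfloor>Y2 * g\<rfloor>)\<bar> \<le> 2"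
    and "\<bar>((X1 - \<lfloor>X1 * g\<rfloor>) - (Y1 - \<lfloor>Y1 * g\<rfloor>)) - ((X2 - \<lfloor>X2 * g\<rfloor>) - (Y2 - \<lfloor>Y2 * g\<rfloor>))\<bar> \<le> 2"
proof -
  define d where "d = (X1 - Y1) - (X2 - Y2)"
  define P where "P = \<lfloor>X1 * g\<rfloor> - \<lfloor>Y1 * g\<rfloor>"
  define Q where "Q = \<lfloor>X2 * g\<rfloor> - \<lfloor>Y2 * g\<rfloor>"
  have d: "d = 0 \<or> d = 1 \<or> d = -1" using assms(1) unfolding d_def by linarith
  have e: "real_of_int X1 * g - Y1 * g - (X2 * g - Y2 * g) = d * g"
    unfolding d_def by (simp add: algebra_simps)
  have dg: "-1 \<le> d * g \<and> d * g \<le> 1" using d assms by auto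
  have dg2: "-1 \<le> d - d * g \<and> d - d * g \<le> 1" using d assms by auto
  have b1: "real_of_int X1 * g - Y1 * g - 1 < P" "P < real_of_int X1 * g - Y1 * g + 1"
    unfolding P_def by (rule floor_diff_bounds)+
  have b2: "real_of_int X2 * g - Y2 * g - 1 < Q" "Q < real_of_int X2 * g - Y2 * g + 1"
    unfolding Q_def by (rule floor_diff_bounds)+
  have "-3 < real_of_int P - real_of_int Q" "real_of_int P - real_of_int Q < 3"
    using b1 b2 e dg by linarith+
  then have "\<bar>P - Q\<bar> \<le> 2" by linarith
  then show "\<bar>(\<lfloor>X1 * g\<rfloor> - \<lfloor>Y1 * g\<rfloor>) - (\<lfloor>X2 * g\<rfloor> - \<lfloor>Y2 * g\<rfloor>)\<bar> \<le> 2"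
    unfolding P_def Q_def .
  have "-3 < real_of_int d - (real_of_int P - real_of_int Q)" "real_of_int d - (real_of_int P - real_of_int Q) < 3"
    using b1 b2 e dg2 by linarith+
  then have dd: "\<bar>d - (P - Q)\<bar> \<le> 2" by linarith
  have eq: "((X1 - \<lfloor>X1 * g\<rfloor>) - (Y1 - \<lfloor>Y1 * g\<rfloor>)) - ((X2 - \<lfloor>X2 * g\<rfloor>) - (Y2 - \<lfloor>Y2 * g\<rfloor>)) = d - (P - Q)"
    unfolding d_def P_def Q_def by (simp only: algebra_simps)
  show "\<bar>((X1 - \<lfloor>X1 * g\<rfloor>) - (Y1 - \<lfloor>Y1 * g\<rfloor>)) - ((X2 - \<lfloor>X2 * g\<rfloor>) - (Y2 - \<lfloor>Y2 * g\<rfloor>))\<bar> \<le> 2"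
    unfolding eq by (rule dd)
qed

lemma freq_lemma:
  fixes h :: "nat \<Rightarrow> nat"
  assumes "\<And>n. \<bar>real (h n) - real n * r\<bar> \<le> K"
  shows "(\<lambda>n. real (h n) / real n) \<longlonglongrightarrow> r"
proof (rule LIM_zero_cancel, rule tendsto_0_le[where f = "\<lambda>n. 1 / real n" and K = K])
  show "(\<lambda>n. 1 / real n) \<longlonglongrightarrow> 0" by (rule lim_const_over_n)
  show "\<forall>\<^sub>F n in sequentially. norm (real (h n) / real n - r) \<le> norm (1 / real n) * K"
    unfolding eventually_sequentially
  proof (intro exI[of _ 1] allI impI)
    fix n :: nat assume n: "1 \<le> n"
    then have np: "real n > 0" by simp
    have "real (h n) / real n - r = (real (h n) - real n * r) / real n"
      using np by (simp add: field_simps)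
    then have "norm (real (h n) / real n - r) = \<bar>real (h n) - real n * r\<bar> / real n"
      using np by simp
    also have "\<dots> \<le> K / real n" using assms[of n] np by (simp add: divide_right_mono)
    finally show "norm (real (h n) / real n - r) \<le> norm (1 / real n) * K" using np by simp
  qed
qed

lemma abs_mult_le1: "0 \<le> (g::real) \<Longrightarrow> g \<le> 1 \<Longrightarrow> \<bar>x * g\<bar> \<le> \<bar>x\<bar>"
  by (simp add: abs_mult mult_left_le)

theorem theorem1:
  fixes f :: "nat \<Rightarrow> real"
  assumes "f 1 > 0" and "f 2 > 0" and "f 3 > 0"
    and "f 1 + f 2 + f 3 = 1"
  shows "\<exists>(u :: nat \<Rightarrow> ab) (b :: nat \<Rightarrow> nat).
           balanced 1 u \<and> range b \<subseteq> {2, 3} \<and> balanced 1 b \<and>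
           (\<forall>i\<in>{1, 2, 3}. has_freq (colour u (\<lambda>_. 1) b) i (f i)) \<and>
           balanced 2 (colour u (\<lambda>_. 1) b)"
proof -
  define al where "al = f 1"
  define be where "be = f 3 / (f 2 + f 3)"
  have al0: "0 \<le> al" "al \<le> 1" using assms unfolding al_def by auto
  have be0: "0 \<le> be" "be \<le> 1" using assms unfolding be_def by (auto simp: field_simps)
  have f1: "f 1 = al" unfolding al_def ..
  have s1: "1 - al = f 2 + f 3" using assms(4) unfolding al_def by linarith
  have pos: "f 2 + f 3 \<noteq> 0" using assms(2,3) by linarith
  have f2: "f 2 = (1 - al) * (1 - be)" and f3: "f 3 = (1 - al) * be"
    unfolding s1 be_def using pos by (simp_all add: field_simps)
  define u :: "nat \<Rightarrow> ab" where "u = mech al LetA LetB"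
  define b :: "nat \<Rightarrow> nat" where "b = mech be 3 2"
  define v where "v = colour u (\<lambda>_. 1) b"
  define A where "A m = \<lfloor>real m * al\<rfloor>" for m :: nat
  define Bc where "Bc m = int m - A m" for m :: nat
  have hu: "int (occ u x 0 m) = (if x = LetA then A m else Bc m)" for x m
    using mech_occ[of LetA LetB al x m] al0 unfolding u_def A_def Bc_def by (cases x) auto
  have hb: "int (occ b y 0 k) = (if y = 3 then \<lfloor>real k * be\<rfloor> else if y = 2 then int k - \<lfloor>real k * be\<rfloor> else 0)" for y k
    using mech_occ[of "3::nat" 2 be y k] be0 unfolding b_def by simp
  have huB: "real (occ u LetB 0 m) = real_of_int (Bc m)" for m
    using hu[of LetB m] by (metis ab.distinct(2) of_int_of_nat_eq)
  have huB': "int (occ u LetB 0 m) = Bc m" for m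
    using hu[of LetB m] by simp
  have huA': "int (occ u LetA 0 m) = A m" for m
    using hu[of LetA m] by simp
  define G where "G y n = (if y = (1::nat) then A n else 0) +
       (if y = 3 then \<lfloor>real_of_int (Bc n) * be\<rfloor> else if y = 2 then Bc n - \<lfloor>real_of_int (Bc n) * be\<rfloor> else 0)" for y n
  have hv: "int (occ v y 0 n) = G y n" for y n
  proof -
    have "int (occ v y 0 n) = int (occ (\<lambda>_. 1::nat) y 0 (occ u LetA 0 n)) + int (occ b y 0 (occ u LetB 0 n))"
      unfolding v_def colour_occ by simp
    also have "\<dots> = G y n"
      unfolding const_occ hb huB huB' huA' G_def by simp
    finally show ?thesis .
  qed
  have KA: "\<bar>(A (i+n) - A i) - (A (j+n) - A j)\<bar> \<le> 1" for i j n
    unfolding A_def by (rule K1)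
  have KB: "\<bar>(Bc (i+n) - Bc i) - (Bc (j+n) - Bc j)\<bar> \<le> 1" for i j n
    using KA[of i n j] unfolding Bc_def by simp
  have bal_u: "balanced 1 u"
  proof (rule balancedI[OF hu])
    fix x i j n
    show "\<bar>((if x = LetA then A (i + n) else Bc (i + n)) - (if x = LetA then A i else Bc i)) -
          ((if x = LetA then A (j + n) else Bc (j + n)) - (if x = LetA then A j else Bc j))\<bar> \<le> int 1"
      using KA[of i n j] KB[of i n j] by (cases "x = LetA") simp_all
  qed
  have bal_b: "balanced 1 b"
  proof (rule balancedI[OF hb])
    fix x i j n
    have k: "\<bar>(\<lfloor>real (i+n) * be\<rfloor> - \<lfloor>real i * be\<rfloor>) - (\<lfloor>real (j+n) * be\<rfloor> - \<lfloor>real j * be\<rfloor>)\<bar> \<le> 1"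
      by (rule K1)
    show "\<bar>((if x = 3 then \<lfloor>real (i + n) * be\<rfloor> else if x = 2 then int (i + n) - \<lfloor>real (i + n) * be\<rfloor> else 0) -
          (if x = 3 then \<lfloor>real i * be\<rfloor> else if x = 2 then int i - \<lfloor>real i * be\<rfloor> else 0)) -
         ((if x = 3 then \<lfloor>real (j + n) * be\<rfloor> else if x = 2 then int (j + n) - \<lfloor>real (j + n) * be\<rfloor> else 0) -
          (if x = 3 then \<lfloor>real j * be\<rfloor> else if x = 2 then int j - \<lfloor>real j * be\<rfloor> else 0))\<bar> \<le> int 1"
    proof (cases "x = 3")
      case True then show ?thesis using k by simp
    next
      case False
      show ?thesis
      proof (cases "x = 2")
        case True
        have "(int (i + n) - \<lfloor>real (i + n) * be\<rfloor> - (int i - \<lfloor>real i * be\<rfloor>)) -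
              (int (j + n) - \<lfloor>real (j + n) * be\<rfloor> - (int j - \<lfloor>real j * be\<rfloor>)) =
              - ((\<lfloor>real (i+n) * be\<rfloor> - \<lfloor>real i * be\<rfloor>) - (\<lfloor>real (j+n) * be\<rfloor> - \<lfloor>real j * be\<rfloor>))"
          by simp
        then show ?thesis using k True False by (simp only: if_True if_False abs_minus_cancel) simp
      next
        case False2: False
        then show ?thesis using False by simp
      qed
    qed
  qed
  have rb: "range b \<subseteq> {2, 3}" unfolding b_def mech_def by auto
  have bal_v: "balanced 2 v"
  proof (rule balancedI[OF hv])
    fix y i j n
    note k2 = K2[OF KB[of i n j] be0]
    show "\<bar>(G y (i + n) - G y i) - (G y (j + n) - G y j)\<bar> \<le> int 2"
    proof (cases "y = 1")
      case True then show ?thesis using KA[of i n j] unfolding G_def by simp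
    next
      case False
      then show ?thesis using k2 unfolding G_def by (cases "y = 3"; cases "y = 2") simp_all
    qed
  qed
  have fr: "has_freq v y (f y)" if y: "y \<in> {1,2,3}" for y
  proof -
    have key: "\<bar>real (occ v y 0 n) - real n * f y\<bar> \<le> 3" for n
    proof -
      have r: "real (occ v y 0 n) = real_of_int (G y n)" using hv[of y n] by (metis of_int_of_nat_eq)
      have a1: "\<bar>real_of_int (A n) - real n * al\<bar> \<le> 1"
        using of_int_floor_le[of "real n * al"] real_of_int_floor_add_one_gt[of "real n * al"]
        unfolding A_def by linarith
      have a2: "\<bar>real_of_int (Bc n) - real n * (1 - al)\<bar> \<le> 1"
      proof -
        have "real_of_int (Bc n) - real n * (1 - al) = - (real_of_int (A n) - real n * al)"
          unfolding Bc_def by (simp add: algebra_simps)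
        then show ?thesis using a1 by simp
      qed
      have a3: "\<bar>(real_of_int (Bc n) - real n * (1 - al)) * be\<bar> \<le> 1"
        using abs_mult_le1[OF be0, of "real_of_int (Bc n) - real n * (1 - al)"] a2 by linarith
      have a4: "\<bar>real_of_int \<lfloor>real_of_int (Bc n) * be\<rfloor> - real_of_int (Bc n) * be\<bar> \<le> 1"
        using of_int_floor_le[of "real_of_int (Bc n) * be"] real_of_int_floor_add_one_gt[of "real_of_int (Bc n) * be"]
        by linarith
      have e1: "(real_of_int (Bc n) - real n * (1 - al)) * be = real_of_int (Bc n) * be - real n * ((1 - al) * be)"
        by (simp add: algebra_simps)
      have e2: "real n * ((1 - al) * (1 - be)) = real n * (1 - al) - real n * ((1 - al) * be)"
        by (simp add: algebra_simps)
      consider "y = 1" | "y = 2" | "y = 3" using y by auto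
      then show ?thesis
      proof cases
        case 1 then show ?thesis unfolding r G_def using a1 by (simp add: al_def)
      next
        case 2
        have "real_of_int (G y n) = real_of_int (Bc n) - real_of_int \<lfloor>real_of_int (Bc n) * be\<rfloor>"
          unfolding G_def using 2 by simp
        then show ?thesis unfolding 2 f2 using r[unfolded 2] a2 a3 a4 e1 e2 2 by linarith
      next
        case 3
        have "real_of_int (G y n) = real_of_int \<lfloor>real_of_int (Bc n) * be\<rfloor>"
          unfolding G_def using 3 by simp
        then show ?thesis unfolding 3 f3 using r[unfolded 3] a3 a4 e1 3 by linarith
      qed
    qed
    show ?thesis unfolding has_freq_def by (rule freq_lemma[OF key])
  qed
  show ?thesis
    apply (rule exI[of _ u], rule exI[of _ b])
    using bal_u rb bal_b fr bal_v unfolding v_def by blast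
qed

end
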